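(* Fix $C_1,C_2$ with $C_1>C_2>0$ and fix $C_3\in(0,C_{3,crit})$. Then $\mathfrak L(C_1,C_2,C_3,b)$ is strictly increasing in $b$ on $(b_-(C_3),b_+(C_3))$.
   Context: Let real constants $C_1,C_2$ be given with $2C_1+C_2>0$, and let $C_{3,crit}=\frac1{27}(2C_1+C_2)^3$. For $C_3\in(0,C_{3,crit})$, let $\phi_1<\phi_2<\phi_3$ be the roots of $2(\phi-C_1)^2(\phi+\frac{C_2}2)=C_3$; they satisfy $-\frac{C_2}{2}<\phi_1<\frac{C_1-C_2}{3}<\phi_2<C_1<\phi_3$. Let $U(\phi)=-\frac12\phi^2-\frac12C_2\phi-\frac12C_1C_2-\frac{C_3}{2(\phi-C_1)}$. Set $b_-(C_3)=U(\phi_2)$ and $b_+(C_3)=U(\phi_1)$. For $b\in(b_-(C_3),b_+(C_3))$, let $\phi_-<\phi_+$ be the two solutions of $U(\phi)=b$ with $\phi_1<\phi_-<\phi_2<\phi_+<C_1$. Define $$\mathfrak L(C_1,C_2,C_3,b)=2\int_{\phi_-}^{\phi_+}\frac{d\phi}{\sqrt{2(b-U(\phi))}}.$$ This is the period of the periodic orbit of $\frac12\dot\phi^2+U(\phi)=b$, which describes travelling waves of the DGH equation. *)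

theory Defs
  imports "HOL-Analysis.Analysis"
begin

definition C3crit :: "real \<Rightarrow> real \<Rightarrow> real" where
  "C3crit C1 C2 = (2*C1 + C2)^3 / 27"

definition cubicP :: "real \<Rightarrow> real \<Rightarrow> real \<Rightarrow> real" where
  "cubicP C1 C2 \<phi> = 2 * (\<phi> - C1)^2 * (\<phi> + C2/2)"

definition phi1 :: "real \<Rightarrow> real \<Rightarrow> real \<Rightarrow> real" where
  "phi1 C1 C2 C3 = (THE \<phi>. -C2/2 < \<phi> \<and> \<phi> < (C1 - C2)/3 \<and> cubicP C1 C2 \<phi> = C3)"

definition phi2 :: "real \<Rightarrow> real \<Rightarrow> real \<Rightarrow> real" where
  "phi2 C1 C2 C3 = (THE \<phi>. (C1 - C2)/3 < \<phi> \<and> \<phi> < C1 \<and> cubicP C1 C2 \<phi> = C3)"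

definition U :: "real \<Rightarrow> real \<Rightarrow> real \<Rightarrow> real \<Rightarrow> real" where
  "U C1 C2 C3 \<phi> = - (\<phi>^2)/2 - C2*\<phi>/2 - C1*C2/2 - C3 / (2*(\<phi> - C1))"

definition bminus :: "real \<Rightarrow> real \<Rightarrow> real \<Rightarrow> real" where
  "bminus C1 C2 C3 = U C1 C2 C3 (phi2 C1 C2 C3)"

definition bplus :: "real \<Rightarrow> real \<Rightarrow> real \<Rightarrow> real" where
  "bplus C1 C2 C3 = U C1 C2 C3 (phi1 C1 C2 C3)"

definition phim :: "real \<Rightarrow> real \<Rightarrow> real \<Rightarrow> real \<Rightarrow> real" where
  "phim C1 C2 C3 b = (THE \<phi>. phi1 C1 C2 C3 < \<phi> \<and> \<phi> < phi2 C1 C2 C3 \<and> U C1 C2 C3 \<phi> = b)"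

definition phip :: "real \<Rightarrow> real \<Rightarrow> real \<Rightarrow> real \<Rightarrow> real" where
  "phip C1 C2 C3 b = (THE \<phi>. phi2 C1 C2 C3 < \<phi> \<and> \<phi> < C1 \<and> U C1 C2 C3 \<phi> = b)"

text \<open>Period of the orbit; the integrand is singular (integrably) at the endpoints,
  where it takes the value 0 by HOL's division convention (a null set).\<close>
definition period :: "real \<Rightarrow> real \<Rightarrow> real \<Rightarrow> real \<Rightarrow> real" where
  "period C1 C2 C3 b = 2 * integral {phim C1 C2 C3 b .. phip C1 C2 C3 b}
      (\<lambda>\<phi>. 1 / sqrt (2 * (b - U C1 C2 C3 \<phi>)))"

end

theory Submission
  imports Defs
begin


lemma cubicP_deriv: "(cubicP C1 C2 has_real_derivative (2*(x - C1)*(3*x + C2 - C1))) (at x)"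
  unfolding cubicP_def[abs_def]
  by (auto intro!: derivative_eq_intros simp: algebra_simps power2_eq_square)

locale dgh =
  fixes C1 C2 C3 :: real
  assumes C12: "C1 > C2" and C2pos: "C2 > 0" and C3pos: "0 < C3" and C3lt: "C3 < C3crit C1 C2"
begin

abbreviation "P \<equiv> cubicP C1 C2"
abbreviation "m0 \<equiv> (C1 - C2)/3"

lemma P_left: "P (-C2/2) = 0" by (simp add: cubicP_def)
lemma P_mid: "P m0 = C3crit C1 C2" by (simp add: cubicP_def C3crit_def field_simps power2_eq_square power3_eq_cube)
lemma P_right: "P C1 = 0" by (simp add: cubicP_def)

lemma order0: "-C2/2 < m0" "m0 < C1" using C12 C2pos by auto

lemma contP: "continuous_on S P" unfolding cubicP_def[abs_def] by (intro continuous_intros)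
lemma isContP: "isCont P x" unfolding cubicP_def[abs_def] by (intro continuous_intros)

lemma P_inc:
  assumes "-C2/2 \<le> x" "x < y" "y \<le> m0" shows "P x < P y"
proof (rule DERIV_pos_imp_increasing_open[OF \<open>x<y\<close> _ contP])
  fix z assume "x < z" "z < y"
  hence "z < C1" "3*z + C2 - C1 < 0" using assms order0 by auto
  hence "2*(z - C1)*(3*z + C2 - C1) > 0" by (simp add: mult_neg_neg)
  thus "\<exists>y. DERIV P z :> y \<and> y > 0" using cubicP_deriv by blast
qed

lemma P_dec:
  assumes "m0 \<le> x" "x < y" "y \<le> C1" shows "P x > P y"
proof (rule DERIV_neg_imp_decreasing_open[OF \<open>x<y\<close> _ contP])
  fix z assume "x < z" "z < y"
  hence "z < C1" "3*z + C2 - C1 > 0" using assms by auto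
  hence "2*(z - C1)*(3*z + C2 - C1) < 0" by (simp add: mult_neg_pos)
  thus "\<exists>y. DERIV P z :> y \<and> y < 0" using cubicP_deriv by blast
qed

lemma phi1_ex: "\<exists>x. -C2/2 < x \<and> x < m0 \<and> P x = C3"
proof -
  have "\<exists>x\<ge>-C2/2. x \<le> m0 \<and> P x = C3"
    by (rule IVT) (use P_left P_mid C3pos C3lt order0 isContP in auto)
  then obtain x where x: "-C2/2 \<le> x" "x \<le> m0" "P x = C3" by auto
  have "x \<noteq> -C2/2" using x P_left C3pos by auto
  moreover have "x \<noteq> m0" using x(3) P_mid C3lt by (metis less_irrefl)
  ultimately show ?thesis using x by force
qed

lemma phi1_prop: "-C2/2 < phi1 C1 C2 C3 \<and> phi1 C1 C2 C3 < m0 \<and> P (phi1 C1 C2 C3) = C3"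
proof -
  obtain x where x: "-C2/2 < x \<and> x < m0 \<and> P x = C3" using phi1_ex by auto
  have "(THE x. -C2/2 < x \<and> x < (C1 - C2)/3 \<and> cubicP C1 C2 x = C3) = x"
  proof (rule the_equality)
    show "-C2/2 < x \<and> x < (C1 - C2)/3 \<and> cubicP C1 C2 x = C3" using x by simp
    fix y assume y: "-C2/2 < y \<and> y < (C1 - C2)/3 \<and> cubicP C1 C2 y = C3"
    show "y = x"
    proof (rule ccontr)
      assume "y \<noteq> x"
      hence "y < x \<or> x < y" by auto
      thus False using P_inc[of y x] P_inc[of x y] x y by auto
    qed
  qed
  thus ?thesis using x unfolding phi1_def by simp
qed

lemma phi2_ex: "\<exists>x. m0 < x \<and> x < C1 \<and> P x = C3"
proof -
  have "\<exists>x\<ge>m0. x \<le> C1 \<and> P x = C3"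
    by (rule IVT2) (use P_right P_mid C3pos C3lt order0 isContP in auto)
  then obtain x where x: "m0 \<le> x" "x \<le> C1" "P x = C3" by auto
  have "x \<noteq> C1" using x P_right C3pos by auto
  moreover have "x \<noteq> m0" using x(3) P_mid C3lt by (metis less_irrefl)
  ultimately show ?thesis using x by force
qed

lemma phi2_prop: "m0 < phi2 C1 C2 C3 \<and> phi2 C1 C2 C3 < C1 \<and> P (phi2 C1 C2 C3) = C3"
proof -
  obtain x where x: "m0 < x \<and> x < C1 \<and> P x = C3" using phi2_ex by auto
  have "(THE x. (C1 - C2)/3 < x \<and> x < C1 \<and> cubicP C1 C2 x = C3) = x"
  proof (rule the_equality)
    show "(C1 - C2)/3 < x \<and> x < C1 \<and> cubicP C1 C2 x = C3" using x by simp
    fix y assume y: "(C1 - C2)/3 < y \<and> y < C1 \<and> cubicP C1 C2 y = C3"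
    show "y = x"
    proof (rule ccontr)
      assume "y \<noteq> x"
      hence "y < x \<or> x < y" by auto
      thus False using P_dec[of y x] P_dec[of x y] x y by auto
    qed
  qed
  thus ?thesis using x unfolding phi2_def by simp
qed


abbreviation "p1 \<equiv> phi1 C1 C2 C3"
abbreviation "p2 \<equiv> phi2 C1 C2 C3"
abbreviation "UU \<equiv> U C1 C2 C3"

lemma p12: "-C2/2 < p1" "p1 < m0" "m0 < p2" "p2 < C1" "P p1 = C3" "P p2 = C3"
  using phi1_prop phi2_prop by auto

lemma m0pos: "0 < m0" using C12 by simp

lemma U_deriv0: "x \<noteq> C1 \<Longrightarrow> (UU has_real_derivative (- x - C2/2 + C3/(2*(x-C1)^2))) (at x)"
  unfolding U_def[abs_def]
  apply (rule derivative_eq_intros refl | simp)+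
  apply (subgoal_tac "(2*x-2*C1)*(2*x-2*C1) = 4*(x-C1)^2")
   apply simp
  apply (simp add: power2_eq_square algebra_simps)
  done

lemma U_deriv: assumes "x \<noteq> C1" shows "(UU has_real_derivative ((C3 - P x)/(2*(x-C1)^2))) (at x)"
proof -
  have ne: "x - C1 \<noteq> 0" using assms by simp
  have "(C3 - P x)/(2*(x-C1)^2) = C3/(2*(x-C1)^2) - P x/(2*(x-C1)^2)" by (rule diff_divide_distrib)
  moreover have "P x/(2*(x-C1)^2) = x + C2/2" using ne by (simp add: cubicP_def)
  ultimately have "- x - C2/2 + C3/(2*(x-C1)^2) = (C3 - P x)/(2*(x-C1)^2)" by simp
  thus ?thesis using U_deriv0[OF assms] by simp
qed

lemma U_cont: "C1 \<notin> S \<Longrightarrow> continuous_on S UU"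
  unfolding U_def[abs_def] by (intro continuous_intros) auto

lemma P_gt: "p1 < x \<Longrightarrow> x < p2 \<Longrightarrow> P x > C3"
proof -
  assume x: "p1 < x" "x < p2"
  show ?thesis
  proof (cases "x \<le> m0")
    case True
    thus ?thesis using P_inc[of p1 x] p12 x by auto
  next
    case False
    thus ?thesis using P_dec[of x p2] p12 x by auto
  qed
qed

lemma P_lt: "p2 < x \<Longrightarrow> x < C1 \<Longrightarrow> P x < C3"
  using P_dec[of p2 x] p12 by auto

lemma U_dec: assumes "p1 \<le> x" "x < y" "y \<le> p2" shows "UU x > UU y"
proof (rule DERIV_neg_imp_decreasing_open[OF \<open>x<y\<close>])
  fix z assume z: "x < z" "z < y"
  hence "z \<noteq> C1" "P z > C3" using assms p12 P_gt[of z] by auto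
  moreover have "(x - C1)^2 \<ge> 0" by simp
  ultimately have "(C3 - P z)/(2*(z-C1)^2) < 0" by (simp add: divide_neg_pos)
  thus "\<exists>y. DERIV UU z :> y \<and> y < 0" using U_deriv \<open>z \<noteq> C1\<close> by blast
next
  show "continuous_on {x..y} UU" using assms p12 by (intro U_cont) auto
qed

lemma U_inc: assumes "p2 \<le> x" "x < y" "y < C1" shows "UU x < UU y"
proof (rule DERIV_pos_imp_increasing_open[OF \<open>x<y\<close>])
  fix z assume z: "x < z" "z < y"
  hence "z \<noteq> C1" "P z < C3" using assms p12 P_lt[of z] by auto
  thus "\<exists>y. DERIV UU z :> y \<and> y > 0" using U_deriv \<open>z \<noteq> C1\<close>
    by (intro exI[of _ "(C3 - P z)/(2*(z-C1)^2)"]) (auto intro!: divide_pos_pos)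
next
  show "continuous_on {x..y} UU" using assms p12 by (intro U_cont) auto
qed

lemma bm_lt_bp: "bminus C1 C2 C3 < bplus C1 C2 C3"
  unfolding bminus_def bplus_def using U_dec[of p1 p2] p12 by auto

lemma U_big: "\<exists>q. p2 < q \<and> q < C1 \<and> UU q > b"
proof -
  define K where "K = (C1^2 + 2*C1*C2)/2"
  define \<delta> where "\<delta> = min ((C1 - p2)/2) (C3/(2*(\<bar>b\<bar>+\<bar>K\<bar>+1)))"
  have dpos: "\<delta> > 0" unfolding \<delta>_def using p12 C3pos by auto
  have dle: "\<delta> \<le> (C1 - p2)/2" "\<delta> \<le> C3/(2*(\<bar>b\<bar>+\<bar>K\<bar>+1))" unfolding \<delta>_def
    by (rule min.cobounded1, rule min.cobounded2)
  define q where "q = C1 - \<delta>"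
  have q: "p2 < q" "q < C1" using dpos dle p12 unfolding q_def by auto
  have q0: "0 < q" using q p12 m0pos by linarith
  define Z where "Z = C3/(2*\<delta>)"
  define T where "T = -(q^2 + C2*q)/2 - C1*C2/2"
  have hZ: "Z \<ge> \<bar>b\<bar>+\<bar>K\<bar>+1"
  proof -
    have "2*\<delta>*(\<bar>b\<bar>+\<bar>K\<bar>+1) \<le> C3" using dle(2) dpos by (simp add: field_simps)
    thus ?thesis using dpos unfolding Z_def by (simp add: field_simps)
  qed
  have "q^2 + C2*q \<le> C1^2 + C1*C2"
    using q q0 C2pos by (auto intro!: add_mono power_mono simp: mult.commute[of C1])
  hence hT: "T \<ge> -K" unfolding K_def T_def by (simp add: field_simps)
  have hU: "UU q = T + Z"
    unfolding U_def q_def T_def Z_def by (simp add: field_simps)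
  have "K \<le> \<bar>K\<bar>" "b \<le> \<bar>b\<bar>" by auto
  hence "UU q > b" using hZ hT hU by linarith
  thus ?thesis using q by blast
qed


lemma am_ex: assumes "bminus C1 C2 C3 < b" "b < bplus C1 C2 C3"
  shows "p1 < phim C1 C2 C3 b \<and> phim C1 C2 C3 b < p2 \<and> UU (phim C1 C2 C3 b) = b"
proof -
  have "\<exists>x. p1 \<le> x \<and> x \<le> p2 \<and> UU x = b"
    by (rule IVT2') (use assms p12 in \<open>auto simp: bminus_def bplus_def intro!: U_cont\<close>)
  then obtain x where x: "p1 \<le> x" "x \<le> p2" "UU x = b" by auto
  have "x \<noteq> p1" "x \<noteq> p2" using x assms unfolding bminus_def bplus_def by auto
  hence x': "p1 < x" "x < p2" using x by auto
  have "(THE x. p1 < x \<and> x < p2 \<and> UU x = b) = x"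
  proof (rule the_equality)
    show "p1 < x \<and> x < p2 \<and> UU x = b" using x x' by simp
    fix y assume y: "p1 < y \<and> y < p2 \<and> UU y = b"
    show "y = x"
    proof (rule ccontr)
      assume "y \<noteq> x"
      hence "y < x \<or> x < y" by auto
      thus False using U_dec[of y x] U_dec[of x y] x x' y by auto
    qed
  qed
  thus ?thesis using x x' unfolding phim_def by simp
qed

lemma cp_ex: assumes "bminus C1 C2 C3 < b" "b < bplus C1 C2 C3"
  shows "p2 < phip C1 C2 C3 b \<and> phip C1 C2 C3 b < C1 \<and> UU (phip C1 C2 C3 b) = b"
proof -
  obtain q where q: "p2 < q" "q < C1" "UU q > b" using U_big by blast
  have "\<exists>x. p2 \<le> x \<and> x \<le> q \<and> UU x = b"
    by (rule IVT') (use assms p12 q in \<open>auto simp: bminus_def intro!: U_cont\<close>)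
  then obtain x where x: "p2 \<le> x" "x \<le> q" "UU x = b" by auto
  have "x \<noteq> p2" "x \<noteq> q" using x assms q unfolding bminus_def by auto
  hence x': "p2 < x" "x < C1" using x q by auto
  have "(THE x. p2 < x \<and> x < C1 \<and> UU x = b) = x"
  proof (rule the_equality)
    show "p2 < x \<and> x < C1 \<and> UU x = b" using x x' by simp
    fix y assume y: "p2 < y \<and> y < C1 \<and> UU y = b"
    show "y = x"
    proof (rule ccontr)
      assume "y \<noteq> x"
      hence "y < x \<or> x < y" by auto
      thus False using U_inc[of y x] U_inc[of x y] x x' y by auto
    qed
  qed
  thus ?thesis using x x' unfolding phip_def by simp
qed

definition RR :: "real \<Rightarrow> real \<Rightarrow> real" where
  "RR b x = (C1 - x)*(2*b + x^2 + C2*x + C1*C2) - C3"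

lemma RR_U: "x \<noteq> C1 \<Longrightarrow> RR b x = (C1 - x) * (2*(b - UU x))"
  unfolding RR_def U_def by (simp add: field_simps)

lemma RR_shift: "RR b' x = RR b x + 2*(b'-b)*(C1 - x)"
  unfolding RR_def by (simp add: algebra_simps)

lemma RR_factor:
  assumes "RR b a = 0" "RR b c = 0" "a \<noteq> c"
  shows "RR b x = -((x-a)*(x-c)*(x-(C1-C2-a-c)))"
proof -
  define D where "D x = RR b x + (x-a)*(x-c)*(x-(C1-C2-a-c))" for x
  have lin: "D x * (c - a) = D a * (c - x) + D c * (x - a)"
    unfolding D_def RR_def by (simp add: algebra_simps power2_eq_square)
  have "D a = 0" "D c = 0" using assms unfolding D_def by auto
  hence "D x * (c - a) = 0" using lin by simp
  hence "D x = 0" using assms(3) by simp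
  thus ?thesis unfolding D_def by simp
qed

end

locale dghb = dgh +
  fixes b :: real
  assumes bin: "bminus C1 C2 C3 < b" "b < bplus C1 C2 C3"
begin

abbreviation "a \<equiv> phim C1 C2 C3 b"
abbreviation "c \<equiv> phip C1 C2 C3 b"
definition "r = C1 - C2 - a - c"

lemma ac: "p1 < a" "a < p2" "UU a = b" "p2 < c" "c < C1" "UU c = b"
  using am_ex[OF bin] cp_ex[OF bin] by auto

lemma R_fac: "RR b x = -((x-a)*(x-c)*(x-r))"
proof -
  have "RR b a = 0" "RR b c = 0" using ac p12 by (auto simp: RR_U)
  thus ?thesis unfolding r_def using RR_factor[of b a c x] ac by auto
qed

lemma r_lt: "r < p1"
proof -
  have "RR b p1 = (C1 - p1) * (2*(b - UU p1))" using p12 by (intro RR_U) auto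
  moreover have "UU p1 = bplus C1 C2 C3" unfolding bplus_def by simp
  ultimately have "RR b p1 < 0" using bin p12 by (simp add: mult_pos_neg)
  hence "(p1-a)*(p1-c)*(p1-r) > 0" using R_fac[of p1] by simp
  moreover have "(p1-a)*(p1-c) > 0" using ac p12 by (simp add: mult_neg_neg)
  ultimately have "p1 - r > 0" by (simp add: zero_less_mult_iff)
  thus ?thesis by simp
qed

lemma vieta: "C3 = (C1-a)*(C1-c)*(C1-r)"
  using R_fac[of C1] unfolding RR_def by (simp add: algebra_simps)

lemma pos_between: "a < x \<Longrightarrow> x < c \<Longrightarrow> UU x < b"
proof -
  assume x: "a < x" "x < c"
  show ?thesis
  proof (cases "x \<le> p2")
    case True thus ?thesis using U_dec[of a x] ac x by auto
  next
    case False thus ?thesis using U_inc[of x c] ac x by auto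
  qed
qed

lemma integrand_eq:
  assumes "a < x" "x < c"
  shows "1 / sqrt (2*(b - UU x)) = (1 / sqrt ((x-a)*(c-x))) * sqrt ((C1-x)/(x-r))"
proof -
  have xC: "x < C1" using assms ac by auto
  have "2*(b - UU x) = RR b x / (C1 - x)" using RR_U[of x b] xC by (simp add: field_simps)
  also have "\<dots> = (((x-a)*(c-x)) * (x-r))/(C1-x)"
  proof -
    have "-((x-a)*(x-c)*(x-r)) = ((x-a)*(c-x))*(x-r)" by (simp add: algebra_simps)
    thus ?thesis using R_fac[of x] by simp
  qed
  also have "\<dots> = ((x-a)*(c-x)) * ((x-r)/(C1-x))" by simp
  finally have e: "2*(b - UU x) = ((x-a)*(c-x)) * ((x-r)/(C1-x))" .
  have "x - r > 0" using r_lt ac assms by auto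
  hence "1 / sqrt ((x-r)/(C1-x)) = sqrt ((C1-x)/(x-r))"
    using xC by (simp add: real_sqrt_divide)
  moreover have "1 / sqrt (2*(b - UU x)) = (1/sqrt((x-a)*(c-x))) * (1/sqrt((x-r)/(C1-x)))"
    unfolding e real_sqrt_mult[of "(x-a)*(c-x)"] by simp
  ultimately show ?thesis by simp
qed


end


context dghb begin
definition "gt t = (a+c)/2 - (c-a)/2 * cos t"
definition "H t = sqrt ((C1 - gt t)/(gt t - r))"
definition "uu x = (a+c-2*x)/(c-a)"
definition "th x = arccos (uu x)"

lemma ac_lt: "a < c" using ac by auto

lemma gt_ge: "a \<le> gt t" "gt t \<le> c"
proof -
  have "gt t - a = (c-a)/2*(1 - cos t)" "c - gt t = (c-a)/2*(1 + cos t)"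
    unfolding gt_def by (simp_all add: field_simps)
  moreover have h: "0 \<le> 1 - cos t" "0 \<le> 1 + cos t"
    using cos_le_one[of t] cos_ge_minus_one[of t] by linarith+
  moreover have "(c-a)/2*(1 - cos t) \<ge> 0" "(c-a)/2*(1 + cos t) \<ge> 0"
    using ac_lt h by (auto intro!: mult_nonneg_nonneg)
  ultimately show "a \<le> gt t" "gt t \<le> c" by linarith+
qed

lemma H_cont: "continuous_on S H"
proof -
  have "\<forall>t. gt t - r \<noteq> 0" using gt_ge r_lt ac by (smt (verit))
  thus ?thesis unfolding H_def[abs_def] gt_def[abs_def] by (intro continuous_intros) auto
qed

lemma uu_bounds: "x \<in> {a..c} \<Longrightarrow> -1 \<le> uu x \<and> uu x \<le> 1"
  unfolding uu_def using ac_lt by (auto simp: field_simps)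

lemma gt_th: "x \<in> {a..c} \<Longrightarrow> gt (th x) = x"
  unfolding gt_def th_def using uu_bounds[of x] ac_lt by (simp add: cos_arccos uu_def field_simps)

lemma th_deriv:
  assumes "a < x" "x < c"
  shows "(th has_real_derivative (1/sqrt((x-a)*(c-x)))) (at x)"
proof -
  have ca: "c - a > 0" using ac_lt by simp
  have "((\<lambda>x. a+c-2*x) has_real_derivative -2) (at x)" by (auto intro!: derivative_eq_intros)
  from DERIV_cdivide[OF this, of "c-a"]
  have d1: "(uu has_real_derivative (-2/(c-a))) (at x)" unfolding uu_def[abs_def] by simp
  have ub: "-1 < uu x" "uu x < 1" unfolding uu_def using assms ca by (auto simp: field_simps)
  have d2: "(arccos has_real_derivative inverse (- sqrt (1 - (uu x)\<^sup>2))) (at (uu x))"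
    using DERIV_arccos[OF ub] .
  have d0: "c - a \<noteq> 0" using ca by simp
  have "(uu x)^2 = (a+c-2*x)^2/(c-a)^2" by (simp add: uu_def power_divide)
  moreover have "(1::real) = (c-a)^2/(c-a)^2" using d0 by simp
  ultimately have "1 - (uu x)^2 = ((c-a)^2 - (a+c-2*x)^2)/(c-a)^2" by (simp add: diff_divide_distrib)
  moreover have "(c-a)^2 - (a+c-2*x)^2 = 4*((x-a)*(c-x))" by (simp add: power2_eq_square algebra_simps)
  moreover have "(2/(c-a))^2 * ((x-a)*(c-x)) = 4*((x-a)*(c-x))/(c-a)^2" by (simp add: power_divide)
  ultimately have one: "1 - (uu x)^2 = (2/(c-a))^2 * ((x-a)*(c-x))" by simp
  have pos: "(x-a)*(c-x) > 0" using assms by simp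
  have "sqrt (1 - (uu x)^2) = (2/(c-a)) * sqrt((x-a)*(c-x))"
    unfolding one real_sqrt_mult using ca by simp
  hence "inverse (- sqrt (1 - (uu x)\<^sup>2)) * (-2/(c-a)) = 1/sqrt((x-a)*(c-x))"
    using ca pos by (simp add: field_simps)
  thus ?thesis using DERIV_chain2[OF d2 d1] unfolding th_def[abs_def] by simp
qed

lemma th_a: "th a = 0" unfolding th_def uu_def using ac_lt by simp
lemma th_c: "th c = pi"
proof -
  have "uu c = -1" unfolding uu_def using ac_lt by (simp add: field_simps)
  thus ?thesis unfolding th_def by simp
qed

lemma period_H: "period C1 C2 C3 b = 2 * integral {0..pi} H"
proof -
  have sub: "((\<lambda>x. (1/sqrt((x-a)*(c-x))) *\<^sub>R H (th x)) has_integral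
      (integral {th a..th c} H - integral {th c..th a} H)) {a..c}"
  proof (rule has_integral_substitution_general[of "{a,c}" a c th 0 pi H])
    show "finite {a,c}" by simp
    show "a \<le> c" using ac_lt by simp
    show "th ` {a..c} \<subseteq> {0..pi}"
    proof (rule image_subsetI)
      fix x assume "x \<in> {a..c}"
      from uu_bounds[OF this] show "th x \<in> {0..pi}" unfolding th_def
        by (auto intro!: arccos_lbound arccos_ubound)
    qed
    show "continuous_on {0..pi} H" by (rule H_cont)
    show "continuous_on {a..c} th" unfolding th_def[abs_def] uu_def[abs_def] using uu_bounds
      using ac_lt by (intro continuous_intros) (auto simp: uu_def)
    fix x assume "x \<in> {a..c} - {a,c}"
    hence "a < x" "x < c" by auto
    thus "(th has_real_derivative (1/sqrt((x-a)*(c-x)))) (at x within {a..c})"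
      using th_deriv has_field_derivative_at_within by blast
  qed
  have "integral {th c..th a} H = 0" unfolding th_a th_c by simp
  hence sub': "((\<lambda>x. (1/sqrt((x-a)*(c-x))) * H (th x)) has_integral integral {0..pi} H) {a..c}"
    using sub unfolding th_a th_c by simp
  have "((\<lambda>x. 1 / sqrt (2*(b - UU x))) has_integral integral {0..pi} H) {a..c}"
  proof (rule has_integral_spike_finite[OF _ _ sub'])
    show "finite {a,c}" by simp
    fix x assume "x \<in> {a..c} - {a,c}"
    hence x: "a < x" "x < c" by auto
    have "H (th x) = sqrt ((C1-x)/(x-r))" unfolding H_def using gt_th[of x] x by simp
    thus "1 / sqrt (2*(b - UU x)) = (1/sqrt((x-a)*(c-x))) * H (th x)"
      using integrand_eq[OF x] by simp
  qed
  thus ?thesis unfolding period_def by (simp add: integral_unique)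
qed

end



definition nn :: "real \<Rightarrow> real \<Rightarrow> real \<Rightarrow> real \<Rightarrow> real" where
  "nn hh k u x = x*(3*x-hh)^2 - u*x*(hh-x)^2 + 4*u*k"
definition Af :: "real \<Rightarrow> real \<Rightarrow> real \<Rightarrow> real \<Rightarrow> real" where
  "Af hh k u x = 2*x^2*(3*x-hh) / nn hh k u x"
definition Ef :: "real \<Rightarrow> real \<Rightarrow> real \<Rightarrow> real \<Rightarrow> real" where
  "Ef hh k u x = 4*x^2*(2*x-hh) / nn hh k u x"

definition valid :: "real \<Rightarrow> real \<Rightarrow> real \<Rightarrow> bool" where
  "valid hh k x \<longleftrightarrow> hh/3 < x \<and> x < hh \<and> 4*k < x*(hh-x)^2 \<and> 0 < 2*x^3 - hh*x^2 + k"

lemma nn_alt: "nn hh k u x = (1-u)*(x*(3*x-hh)^2) + u*(4*(2*x^3 - hh*x^2 + k))"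
  unfolding nn_def by (simp add: algebra_simps power2_eq_square power3_eq_cube)

lemma nn_pos:
  assumes "valid hh k x" "0 \<le> u" "u \<le> 1" "0 < hh"
  shows "nn hh k u x > 0"
proof -
  have x: "x > 0" "3*x - hh \<noteq> 0" using assms unfolding valid_def by auto
  have p1: "x*(3*x-hh)^2 > 0" using x by simp
  have p2: "4*(2*x^3 - hh*x^2 + k) > 0" using assms unfolding valid_def by simp
  show ?thesis
  proof (cases "u < 1")
    case True
    hence "(1-u)*(x*(3*x-hh)^2) > 0" using p1 by simp
    moreover have "u*(4*(2*x^3 - hh*x^2 + k)) \<ge> 0" using p2 assms by simp
    ultimately show ?thesis unfolding nn_alt by linarith
  next
    case False
    hence "u = 1" using assms by simp
    thus ?thesis unfolding nn_alt using p2 by simp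
  qed
qed

lemma nn_deriv: "(nn hh k u has_real_derivative
    (27*x^2 - 12* hh*x + hh^2 - u*(hh^2 - 4* hh*x + 3*x^2))) (at x)"
  unfolding nn_def[abs_def]
  by (rule derivative_eq_intros refl | simp)+ (simp add: algebra_simps power2_eq_square)

lemma Af_deriv:
  assumes "nn hh k u x \<noteq> 0"
  shows "(Af hh k u has_real_derivative
     (2*x*(-hh*x*(3*x-hh)^2 + u*(hh*x*(5*x-hh)*(x-hh) + 4*k*(9*x-2* hh)))) / (nn hh k u x)^2) (at x)"
proof -
  have f: "((\<lambda>x. 2*x^2*(3*x-hh)) has_real_derivative (18*x^2 - 4* hh*x)) (at x)"
    by (rule derivative_eq_intros refl | simp)+ (simp add: algebra_simps power2_eq_square)
  have "(18*x^2 - 4* hh*x) * nn hh k u x - 2*x^2*(3*x-hh) * (27*x^2 - 12* hh*x + hh^2 - u*(hh^2 - 4* hh*x + 3*x^2))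
      = 2*x*(-hh*x*(3*x-hh)^2 + u*(hh*x*(5*x-hh)*(x-hh) + 4*k*(9*x-2* hh)))"
    unfolding nn_def by (simp add: algebra_simps power2_eq_square power3_eq_cube)
  thus ?thesis using DERIV_divide[OF f nn_deriv assms] unfolding Af_def[abs_def]
    by (simp add: power2_eq_square)
qed

lemma Ef_deriv:
  assumes "nn hh k u x \<noteq> 0"
  shows "(Ef hh k u has_real_derivative
     (4*((3*x-hh)*x*(hh*x*(hh-x)*(1-u) + 8*u*k))) / (nn hh k u x)^2) (at x)"
proof -
  have f: "((\<lambda>x. 4*x^2*(2*x-hh)) has_real_derivative (24*x^2 - 8* hh*x)) (at x)"
    by (rule derivative_eq_intros refl | simp)+ (simp add: algebra_simps power2_eq_square)
  have "(24*x^2 - 8* hh*x) * nn hh k u x - 4*x^2*(2*x-hh) * (27*x^2 - 12* hh*x + hh^2 - u*(hh^2 - 4* hh*x + 3*x^2))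
      = 4*((3*x-hh)*x*(hh*x*(hh-x)*(1-u) + 8*u*k))"
    unfolding nn_def by (simp add: algebra_simps power2_eq_square power3_eq_cube)
  thus ?thesis using DERIV_divide[OF f nn_deriv assms] unfolding Ef_def[abs_def]
    by (simp add: power2_eq_square)
qed


lemma seg_valid:
  assumes "valid hh k y" "valid hh k z" "y \<le> x" "x \<le> z" "0 < hh"
  shows "valid hh k x"
proof -
  have b: "hh/3 < x" "x < hh" using assms unfolding valid_def by auto
  have "x*(hh-x)^2 \<ge> z*(hh-z)^2"
  proof (rule DERIV_nonpos_imp_nonincreasing[OF \<open>x \<le> z\<close>])
    fix t assume t: "x \<le> t" "t \<le> z"
    have "((\<lambda>t. t*(hh-t)^2) has_real_derivative ((hh-t)*(hh-3*t))) (at t)"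
      by (rule derivative_eq_intros refl | simp)+ (simp add: algebra_simps power2_eq_square)
    moreover have "(hh-t)*(hh-3*t) \<le> 0" using t b assms unfolding valid_def
      by (intro mult_nonneg_nonpos) auto
    ultimately show "\<exists>y. ((\<lambda>t. t*(hh-t)^2) has_real_derivative y) (at t) \<and> y \<le> 0" by blast
  qed
  moreover have "2*x^3 - hh*x^2 \<ge> 2*y^3 - hh*y^2"
  proof (rule DERIV_nonneg_imp_nondecreasing[OF \<open>y \<le> x\<close>])
    fix t assume t: "y \<le> t" "t \<le> x"
    have "((\<lambda>t. 2*t^3 - hh*t^2) has_real_derivative (2*t*(3*t-hh))) (at t)"
      by (rule derivative_eq_intros refl | simp)+ (simp add: algebra_simps power2_eq_square)
    moreover have "2*t*(3*t-hh) \<ge> 0" using t b assms unfolding valid_def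
      by (intro mult_nonneg_nonneg) auto
    ultimately show "\<exists>y. ((\<lambda>t. 2*t^3 - hh*t^2) has_real_derivative y) (at t) \<and> y \<ge> 0" by blast
  qed
  ultimately show ?thesis using assms b unfolding valid_def by auto
qed

lemma Na_neg:
  assumes "valid hh k x" "0 \<le> u" "u \<le> 1" "0 < hh" "0 < k"
  shows "-hh*x*(3*x-hh)^2 + u*(hh*x*(5*x-hh)*(x-hh) + 4*k*(9*x-2*hh)) < 0"
proof -
  have v: "hh/3 < x" "x < hh" "4*k < x*(hh-x)^2" using assms unfolding valid_def by auto
  have x0: "x > 0" using v assms by simp
  have N0: "-hh*x*(3*x-hh)^2 < 0" using v x0 assms by simp
  have q: "4*k*(9*x-2*hh) < x*(hh-x)^2*(9*x-2*hh)" using v by (intro mult_strict_right_mono) auto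
  have "4*hh*x^3 - x*(hh-x)^2*(9*x-2*hh) = x*(3*x-hh)^2*(2*hh-x)"
    by (simp add: algebra_simps power2_eq_square power3_eq_cube)
  moreover have "x*(3*x-hh)^2*(2*hh-x) \<ge> 0" using v x0 by simp
  ultimately have N1: "-4*hh*x^3 + 4*k*(9*x-2*hh) < 0" using q by linarith
  have id: "-hh*x*(3*x-hh)^2 + u*(hh*x*(5*x-hh)*(x-hh) + 4*k*(9*x-2*hh))
       = (1-u)*(-hh*x*(3*x-hh)^2) + u*(-4*hh*x^3 + 4*k*(9*x-2*hh))"
    by (simp add: algebra_simps power2_eq_square power3_eq_cube)
  show ?thesis
  proof (cases "u < 1")
    case True
    hence "(1-u)*(-hh*x*(3*x-hh)^2) < 0" using N0 by (simp add: mult_pos_neg)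
    moreover have "u*(-4*hh*x^3 + 4*k*(9*x-2*hh)) \<le> 0" using N1 assms by (simp add: mult_nonneg_nonpos)
    ultimately show ?thesis unfolding id by linarith
  next
    case False
    hence "u = 1" using assms by simp
    thus ?thesis unfolding id using N1 by simp
  qed
qed

lemma Af_dec:
  assumes "valid hh k y" "valid hh k z" "y < z" "0 \<le> u" "u \<le> 1" "0 < hh" "0 < k"
  shows "Af hh k u z < Af hh k u y"
proof (rule DERIV_neg_imp_decreasing[OF \<open>y < z\<close>])
  fix x assume x: "y \<le> x" "x \<le> z"
  have v: "valid hh k x" using seg_valid[OF assms(1,2) x assms(6)] .
  hence n: "nn hh k u x > 0" using nn_pos assms by auto
  have x0: "x > 0" using v assms unfolding valid_def by simp
  have "2*x*(-hh*x*(3*x-hh)^2 + u*(hh*x*(5*x-hh)*(x-hh) + 4*k*(9*x-2*hh))) < 0"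
    using Na_neg[OF v assms(4-7)] x0 by (simp add: mult_pos_neg)
  hence "(2*x*(-hh*x*(3*x-hh)^2 + u*(hh*x*(5*x-hh)*(x-hh) + 4*k*(9*x-2*hh)))) / (nn hh k u x)^2 < 0"
    using n by (simp add: divide_neg_pos)
  thus "\<exists>y. (Af hh k u has_real_derivative y) (at x) \<and> y < 0"
    using Af_deriv[of hh k u x] n by auto
qed

lemma Ef_mono:
  assumes "valid hh k y" "valid hh k z" "y \<le> z" "0 \<le> u" "u \<le> 1" "0 < hh" "0 < k"
  shows "Ef hh k u y \<le> Ef hh k u z"
proof (rule DERIV_nonneg_imp_nondecreasing[OF \<open>y \<le> z\<close>])
  fix x assume x: "y \<le> x" "x \<le> z"
  have v: "valid hh k x" using seg_valid[OF assms(1,2) x assms(6)] .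
  hence n: "nn hh k u x > 0" using nn_pos assms by auto
  have vv: "hh/3 < x" "x < hh" using v unfolding valid_def by auto
  have "hh*x*(hh-x)*(1-u) \<ge> 0" using vv assms by (intro mult_nonneg_nonneg) auto
  hence "(3*x-hh)*x*(hh*x*(hh-x)*(1-u) + 8*u*k) \<ge> 0" using vv assms
    by (intro mult_nonneg_nonneg) auto
  hence "(4*((3*x-hh)*x*(hh*x*(hh-x)*(1-u) + 8*u*k))) / (nn hh k u x)^2 \<ge> 0"
    by simp
  thus "\<exists>y. (Ef hh k u has_real_derivative y) (at x) \<and> y \<ge> 0"
    using Ef_deriv[of hh k u x] n by auto
qed


definition Mf :: "real \<Rightarrow> real \<Rightarrow> real" where "Mf hh x = (hh-x)/2"
definition wfun :: "real \<Rightarrow> real \<Rightarrow> real \<Rightarrow> real \<Rightarrow> real" where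
  "wfun hh k u x = sqrt (u*((Mf hh x)^2 - k/x))"
definition Gf :: "real \<Rightarrow> real \<Rightarrow> real \<Rightarrow> real \<Rightarrow> real" where
  "Gf hh k u x = sqrt ((Mf hh x + wfun hh k u x)/(x - Mf hh x - wfun hh k u x))
              + sqrt ((Mf hh x - wfun hh k u x)/(x - Mf hh x + wfun hh k u x))"

lemma sq_sum: "0 \<le> p \<Longrightarrow> 0 \<le> q \<Longrightarrow> (sqrt p + sqrt q)^2 = p + q + 2* sqrt (p*q)"
  by (simp add: power2_sum real_sqrt_mult)

lemma G_sq:
  assumes v: "valid hh k x" and u: "0 \<le> u" "u \<le> 1" and hk: "0 < hh" "0 < k"
  shows "Gf hh k u x \<ge> 0 \<and> (Gf hh k u x)^2 = -2 + 2*Af hh k u x + 2* sqrt (1 - Ef hh k u x)"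
proof -
  define M where "M = Mf hh x"
  define w where "w = wfun hh k u x"
  have vv: "hh/3 < x" "x < hh" "4*k < x*(hh-x)^2" "0 < 2*x^3 - hh*x^2 + k"
    using v unfolding valid_def by auto
  have x0: "x > 0" using vv hk by simp
  have M0: "M > 0" unfolding M_def Mf_def using vv by simp
  have M2: "M^2 * x = x*(hh-x)^2/4" unfolding M_def Mf_def by (simp add: power_divide)
  have "k < M^2 * x" using vv(3) M2 by linarith
  hence D2: "k/x < M^2" using x0 by (simp add: pos_divide_less_eq)
  have kx: "k/x > 0" using x0 hk by simp
  have we: "w = sqrt (u*(M^2 - k/x))" unfolding w_def wfun_def M_def ..
  have w2: "w^2 = u*(M^2 - k/x)" unfolding we using D2 u by simp
  have w0: "w \<ge> 0" unfolding we using D2 u by simp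
  have "w^2 \<le> M^2 - k/x" unfolding w2 using D2 u by (simp add: mult_left_le_one_le)
  hence "w^2 < M^2" using kx by linarith
  hence wM: "w < M" using w0 M0 by (simp add: power_less_imp_less_base)
  have xm: "x - M > 0" unfolding M_def Mf_def using vv by simp
  have "(x-M)^2 - (M^2 - k/x) = (2*x^3 - hh*x^2 + k)/x"
    unfolding M_def Mf_def using x0 by (simp add: field_simps power2_eq_square power3_eq_cube)
  hence "(x-M)^2 - (M^2 - k/x) > 0" using vv x0 by simp
  hence "w^2 < (x-M)^2" using \<open>w^2 \<le> M^2 - k/x\<close> by linarith
  hence wxm: "w < x - M" using w0 xm by (simp add: power_less_imp_less_base)
  define Q where "Q = (x-M)^2 - w^2"
  have Qpos: "Q > 0" unfolding Q_def using \<open>w^2 < (x-M)^2\<close> by simp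
  have Y: "x - M - w > 0" "x - M + w > 0" using wxm w0 xm by auto
  have X: "M + w > 0" "M - w > 0" using wM w0 M0 by auto
  have nnQ: "nn hh k u x = 4*x*Q"
    unfolding nn_def Q_def w2 M_def Mf_def using x0
    by (simp add: field_simps power2_eq_square)
  have AQ: "Af hh k u x = x*(x-M)/Q"
  proof -
    have "2*x^2*(3*x-hh) = (4*x)*(x*(x-M))" unfolding M_def Mf_def by (simp add: field_simps power2_eq_square)
    thus ?thesis unfolding Af_def nnQ using x0 by simp
  qed
  have EQ: "Ef hh k u x = x*(2*x-hh)/Q"
  proof -
    show ?thesis unfolding Ef_def nnQ using x0 Qpos by (simp add: field_simps power2_eq_square)
  qed
  have QY: "Q = (x-M-w)*(x-M+w)" unfolding Q_def by (simp add: algebra_simps power2_eq_square)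
  have S1: "(M+w)/(x-M-w) + (M-w)/(x-M+w) = -2 + 2*(x*(x-M)/Q)"
  proof -
    have "(M+w)/(x-M-w) + (M-w)/(x-M+w) = ((M+w)*(x-M+w) + (M-w)*(x-M-w))/Q"
      unfolding QY using Y by (simp add: field_simps)
    also have "\<dots> = -2 + 2*(x*(x-M)/Q)" using Qpos unfolding Q_def
      by (simp add: field_simps power2_eq_square)
    finally show ?thesis .
  qed
  have S2: "((M+w)/(x-M-w)) * ((M-w)/(x-M+w)) = 1 - x*(2*x-hh)/Q"
  proof -
    have "((M+w)/(x-M-w)) * ((M-w)/(x-M+w)) = ((M+w)*(M-w))/Q" unfolding QY by simp
    also have "\<dots> = 1 - x*(2*x-hh)/Q" using Qpos unfolding Q_def M_def Mf_def
      by (simp add: field_simps power2_eq_square)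
    finally show ?thesis .
  qed
  have p1: "(M+w)/(x-M-w) \<ge> 0" "(M-w)/(x-M+w) \<ge> 0" using X Y by auto
  have "(Gf hh k u x)^2 = (sqrt ((M+w)/(x-M-w)) + sqrt ((M-w)/(x-M+w)))^2"
    unfolding Gf_def M_def w_def ..
  also have "\<dots> = (M+w)/(x-M-w) + (M-w)/(x-M+w) + 2* sqrt (((M+w)/(x-M-w)) * ((M-w)/(x-M+w)))"
    using sq_sum[OF p1] .
  also have "\<dots> = -2 + 2*Af hh k u x + 2* sqrt (1 - Ef hh k u x)"
    unfolding S1 S2 AQ EQ by simp
  finally have "(Gf hh k u x)^2 = -2 + 2*Af hh k u x + 2* sqrt (1 - Ef hh k u x)" .
  moreover have "Gf hh k u x \<ge> 0" using p1 unfolding Gf_def M_def w_def by simp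
  ultimately show ?thesis by simp
qed

lemma G_strict:
  assumes "valid hh k y" "valid hh k z" "y < z" "0 \<le> u" "u \<le> 1" "0 < hh" "0 < k"
  shows "Gf hh k u z < Gf hh k u y"
proof -
  have A: "Af hh k u z < Af hh k u y" using Af_dec[OF assms] .
  have E: "Ef hh k u y \<le> Ef hh k u z" using Ef_mono[OF assms(1,2) _ assms(4-7)] assms(3) by simp
  have "sqrt (1 - Ef hh k u z) \<le> sqrt (1 - Ef hh k u y)" using E by simp
  hence "(Gf hh k u z)^2 < (Gf hh k u y)^2"
    using G_sq[OF assms(2,4-7)] G_sq[OF assms(1,4-7)] A by linarith
  moreover have "Gf hh k u y \<ge> 0" using G_sq[OF assms(1,4-7)] by simp
  ultimately show ?thesis by (rule power_less_imp_less_base)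
qed




lemma valid_gen:
  fixes al ga rho :: real
  assumes o: "0 < ga" "ga < al" "al < rho"
  shows "valid (al+ga+rho) (al*ga*rho) rho"
proof -
  have e1: "rho*((al+ga+rho)-rho)^2 - 4*(al*ga*rho) = rho*(al-ga)^2"
    by (simp add: algebra_simps power2_eq_square)
  have p1: "rho*(al-ga)^2 > 0" using o by simp
  have e2: "2*rho^3 - (al+ga+rho)*rho^2 + al*ga*rho = rho*(rho-al)*(rho-ga)"
    by (simp add: algebra_simps power2_eq_square power3_eq_cube)
  have p2: "rho*(rho-al)*(rho-ga) > 0" using o by simp
  have "al+ga+rho < 3*rho" using o by linarith
  hence "(al+ga+rho)/3 < rho" by simp
  moreover have "rho < al+ga+rho" using o by linarith
  moreover have "4*(al*ga*rho) < rho*((al+ga+rho)-rho)^2" using e1 p1 by linarith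
  moreover have "0 < 2*rho^3 - (al+ga+rho)*rho^2 + al*ga*rho" using e2 p2 by linarith
  ultimately show ?thesis unfolding valid_def by blast
qed

context dghb begin

abbreviation "hh \<equiv> 2*C1 + C2"
abbreviation "rho \<equiv> C1 - r"

lemma ord_all: "r < a" "a < c" "c < C1" using r_lt ac p12 by auto

lemma valid_rho: "valid hh C3 rho"
proof -
  define al where "al = C1 - a"
  define ga where "ga = C1 - c"
  have s: "al + ga + rho = hh" unfolding al_def ga_def r_def by simp
  have o: "0 < ga" "ga < al" "al < rho" unfolding al_def ga_def using ord_all by auto
  have C3e: "al*ga*rho = C3" unfolding al_def ga_def using vieta by simp
  from valid_gen[OF o] show ?thesis by (simp only: s C3e)
qed

lemma H_sum: "H t + H (pi - t) = Gf hh C3 ((cos t)^2) rho"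
proof -
  define M where "M = C1 - (a+c)/2"
  define D where "D = (c-a)/2"
  have D0: "D > 0" unfolding D_def using ord_all by simp
  have rho0: "rho > 0" using ord_all by simp
  have Mf: "Mf hh rho = M" unfolding Mf_def M_def r_def by (simp add: field_simps)
  have "C3 / rho = ((C1-a)*(C1-c)*rho)/rho" using vieta by simp
  also have "\<dots> = (C1-a)*(C1-c)" using rho0 by simp
  finally have "C3 / rho = (C1-a)*(C1-c)" .
  hence D2: "M^2 - C3/rho = D^2" unfolding M_def D_def by (simp add: power2_eq_square algebra_simps)
  have w: "wfun hh C3 ((cos t)^2) rho = \<bar>cos t\<bar> * D"
    unfolding wfun_def Mf D2 using D0 by (simp add: real_sqrt_mult)
  have g1: "C1 - gt t = M + D * cos t" "gt t - r = rho - M - D * cos t"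
    unfolding gt_def M_def D_def by (simp_all add: algebra_simps)
  have g2: "C1 - gt (pi - t) = M - D * cos t" "gt (pi - t) - r = rho - M + D * cos t"
    unfolding gt_def M_def D_def by (simp_all add: field_simps)
  have h1: "H t = sqrt ((M + D * cos t)/(rho - M - D * cos t))"
    unfolding H_def g1 ..
  have h2: "H (pi - t) = sqrt ((M - D * cos t)/(rho - M + D * cos t))"
    unfolding H_def g2 ..
  show ?thesis
  proof (cases "cos t \<ge> 0")
    case True
    hence wt: "wfun hh C3 ((cos t)^2) rho = D * cos t" using w by simp
    show ?thesis unfolding Gf_def Mf wt h1 h2 ..
  next
    case False
    hence wt: "wfun hh C3 ((cos t)^2) rho = - (D * cos t)" using w by simp
    have "Gf hh C3 ((cos t)^2) rho = H (pi - t) + H t"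
      unfolding Gf_def Mf wt h1 h2 by (simp only: add_uminus_conv_diff diff_minus_eq_add)
    thus ?thesis by linarith
  qed
qed

lemma H_reflect: "integral {0..pi} (\<lambda>t. H (pi - t)) = integral {0..pi} H"
proof -
  have "((\<lambda>x. (-1) *\<^sub>R H (pi - x)) has_integral
      (integral {pi - 0..pi - pi} H - integral {pi - pi..pi - 0} H)) {0..pi}"
  proof (rule has_integral_substitution_general[of "{}" 0 pi "\<lambda>t. pi - t" 0 pi H "\<lambda>_. -1"])
    show "finite {}" by simp
    show "0 \<le> pi" by simp
    show "(\<lambda>t. pi - t) ` {0..pi} \<subseteq> {0..pi}" by auto
    show "continuous_on {0..pi} H" by (rule H_cont)
    show "continuous_on {0..pi} (\<lambda>t. pi - t)" by (intro continuous_intros)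
    fix x assume "x \<in> {0..pi} - {}"
    show "((\<lambda>t. pi - t) has_real_derivative -1) (at x within {0..pi})"
      by (auto intro!: derivative_eq_intros)
  qed
  hence "((\<lambda>x. - H (pi - x)) has_integral (- integral {0..pi} H)) {0..pi}" by simp
  from has_integral_neg[OF this]
  have "((\<lambda>x. H (pi - x)) has_integral (integral {0..pi} H)) {0..pi}" by simp
  thus ?thesis by (rule integral_unique)
qed

lemma period_sum: "period C1 C2 C3 b = integral {0..pi} (\<lambda>t. H t + H (pi - t))"
proof -
  have i1: "H integrable_on {0..pi}" by (rule integrable_continuous_interval[OF H_cont])
  have c2: "continuous_on {0..pi} (\<lambda>t. H (pi - t))"
    by (rule continuous_on_compose2[OF H_cont[of UNIV]]) (auto intro!: continuous_intros)
  have i2: "(\<lambda>t. H (pi - t)) integrable_on {0..pi}" by (rule integrable_continuous_interval[OF c2])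
  show ?thesis unfolding period_H integral_add[OF i1 i2] H_reflect by simp
qed

lemma sum_cont: "continuous_on {0..pi} (\<lambda>t. H t + H (pi - t))"
proof -
  have c2: "continuous_on {0..pi} (\<lambda>t. H (pi - t))"
    by (rule continuous_on_compose2[OF H_cont[of UNIV]]) (auto intro!: continuous_intros)
  thus ?thesis using H_cont by (intro continuous_on_add) auto
qed

end

lemma neg_of_prod: "(P::real)*X < 0 \<Longrightarrow> P > 0 \<Longrightarrow> X < 0"
  by (simp add: mult_less_0_iff)

context dgh begin

lemma r_mono:
  assumes b1: "bminus C1 C2 C3 < b1" "b1 < bplus C1 C2 C3"
      and b2: "bminus C1 C2 C3 < b2" "b2 < bplus C1 C2 C3" and lt: "b1 < b2"
  shows "dghb.r C1 C2 C3 b1 < dghb.r C1 C2 C3 b2"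
proof -
  interpret B1: dghb C1 C2 C3 b1 by unfold_locales (use b1 in auto)
  interpret B2: dghb C1 C2 C3 b2 by unfold_locales (use b2 in auto)
  have "RR b2 B1.r = RR b1 B1.r + 2*(b2-b1)*(C1 - B1.r)" by (rule RR_shift)
  moreover have "RR b1 B1.r = 0" using B1.R_fac[of B1.r] by simp
  moreover have "C1 - B1.r > 0" using B1.ord_all by simp
  moreover have "2*(b2-b1)*(C1 - B1.r) > 0" using lt \<open>C1 - B1.r > 0\<close> by (intro mult_pos_pos) auto
  ultimately have "RR b2 B1.r > 0" by linarith
  hence "((B1.r - phim C1 C2 C3 b2)*(B1.r - phip C1 C2 C3 b2))*(B1.r - B2.r) < 0"
    using B2.R_fac[of B1.r] by linarith
  moreover have "(B1.r - phim C1 C2 C3 b2)*(B1.r - phip C1 C2 C3 b2) > 0"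
    using B1.r_lt B2.ac B2.ord_all by (intro mult_neg_neg) auto
  ultimately have "B1.r - B2.r < 0" by (rule neg_of_prod)
  thus ?thesis by simp
qed

lemma main:
  assumes b1: "bminus C1 C2 C3 < b1" "b1 < bplus C1 C2 C3"
      and b2: "bminus C1 C2 C3 < b2" "b2 < bplus C1 C2 C3" and lt: "b1 < b2"
  shows "period C1 C2 C3 b1 < period C1 C2 C3 b2"
proof -
  interpret B1: dghb C1 C2 C3 b1 by unfold_locales (use b1 in auto)
  interpret B2: dghb C1 C2 C3 b2 by unfold_locales (use b2 in auto)
  have rr: "B1.r < B2.r" using r_mono[OF b1 b2 lt] .
  have "integral {0..pi} (\<lambda>t. B1.H t + B1.H (pi - t)) < integral {0..pi} (\<lambda>t. B2.H t + B2.H (pi - t))"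
  proof (rule integral_less_real[OF B1.sum_cont B2.sum_cont])
    have "pi/2 \<in> {0<..<pi}" using pi_gt_zero by simp
    thus "{0<..<pi} \<noteq> {}" by blast
    fix t assume "t \<in> {0<..<pi}"
    have u1: "0 \<le> (cos t)^2" by simp
    have u2: "(cos t)^2 \<le> 1"
      using cos_squared_eq[of t] zero_le_power2[of "sin t"] by linarith
    note u = u1 u2
    have "Gf (2*C1+C2) C3 ((cos t)^2) (C1 - B1.r) < Gf (2*C1+C2) C3 ((cos t)^2) (C1 - B2.r)"
      by (rule G_strict[OF B2.valid_rho B1.valid_rho]) (use rr u C12 C2pos C3pos in auto)
    thus "B1.H t + B1.H (pi - t) < B2.H t + B2.H (pi - t)" unfolding B1.H_sum B2.H_sum .
  qed
  thus ?thesis unfolding B1.period_sum B2.period_sum .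
qed

end

theorem lemma1:
  fixes C1 C2 C3 :: real
  assumes "C1 > C2" "C2 > 0" "0 < C3" "C3 < C3crit C1 C2"
  shows "strict_mono_on {bminus C1 C2 C3 <..< bplus C1 C2 C3} (period C1 C2 C3)"
proof -
  interpret dgh C1 C2 C3 by unfold_locales (use assms in auto)
  show ?thesis unfolding strict_mono_on_def using main by auto
qed


end
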